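(* Let $H$ and $G$ be as in the construction described in the context. If $H$ is torsion free, then so is $G$; if $H$ is locally indicable, then so is $G$.
   Context: A group is locally indicable if every nontrivial finitely generated subgroup admits a surjective homomorphism onto $\mathbb{Z}$. Construction: $H$ is a group generated by a countable set $\{a^{(1)},a^{(2)},\ldots\}$. For groups $A,B$, the wreath product $A\,\mathrm{Wr}\,B$ is the semidirect product $A^B\rtimes B$, where $A^B$ is the group of all functions $B\to A$ with pointwise multiplication and $B$ acts by $(bf)(x)=f(xb)$. Let $Z=\langle z\rangle$ be infinite cyclic and let $b^{(i)}\in H^Z$ be given by $b^{(i)}(z^k)=a^{(i)}$ if $k>0$ and $b^{(i)}(z^k)=1$ otherwise. Let $K=\langle z,b^{(i)}\ (i\in\mathbb{N})\rangle\le H\,\mathrm{Wr}\,Z$. Let $\langle s\rangle$ be infinite cyclic and let $c\in K^{\langle s\rangle}$ be given by $c(s)=z$, $c(s^{2^i})=b^{(i)}$ for $i>0$, and $c(s^k)=1$ otherwise. Let $G=\langle c,s\rangle\le K\,\mathrm{Wr}\,\langle s\rangle$. *)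

theory Defs
  imports "HOL-Algebra.Algebra"
begin

text \<open>Unrestricted wreath product A Wr B = A^B semidirect B, where A^B is the group of all
functions B -> A (extensional: undefined outside carrier B), and B acts by (b f)(x) = f(x b).\<close>
definition wreath :: "('a,'c) monoid_scheme \<Rightarrow> ('b,'d) monoid_scheme \<Rightarrow> (('b \<Rightarrow> 'a) \<times> 'b) monoid" where
  "wreath A B = \<lparr>carrier = {(f,b). (\<forall>x\<in>carrier B. f x \<in> carrier A)
                                 \<and> (\<forall>x. x \<notin> carrier B \<longrightarrow> f x = undefined) \<and> b \<in> carrier B},
     monoid.mult = (\<lambda>(f,b) (g,c). (\<lambda>x. if x \<in> carrier B then f x \<otimes>\<^bsub>A\<^esub> g (x \<otimes>\<^bsub>B\<^esub> b) else undefined,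
                           b \<otimes>\<^bsub>B\<^esub> c)),
     monoid.one = (\<lambda>x. if x \<in> carrier B then \<one>\<^bsub>A\<^esub> else undefined, \<one>\<^bsub>B\<^esub>)\<rparr>"

definition torsion_free :: "('a,'c) monoid_scheme \<Rightarrow> bool" where
  "torsion_free G \<longleftrightarrow> (\<forall>x\<in>carrier G. x \<noteq> \<one>\<^bsub>G\<^esub> \<longrightarrow> (\<forall>n::nat. n > 0 \<longrightarrow> x [^]\<^bsub>G\<^esub> n \<noteq> \<one>\<^bsub>G\<^esub>))"

definition locally_indicable :: "('a,'c) monoid_scheme \<Rightarrow> bool" where
  "locally_indicable G \<longleftrightarrow>
     (\<forall>S. finite S \<and> S \<subseteq> carrier G \<and> generate G S \<noteq> {\<one>\<^bsub>G\<^esub>} \<longrightarrow>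
        (\<exists>f. f \<in> hom (subgroup_generated G S) integer_group \<and> f ` generate G S = UNIV))"

text \<open>Z = <z> is modelled as integer_group with z = 1.\<close>
definition KW :: "('a,'c) monoid_scheme \<Rightarrow> ((int \<Rightarrow> 'a) \<times> int) monoid" where
  "KW H = wreath H integer_group"

definition zelt :: "('a,'c) monoid_scheme \<Rightarrow> (int \<Rightarrow> 'a) \<times> int" where
  "zelt H = (\<lambda>_. \<one>\<^bsub>H\<^esub>, 1)"

definition belt :: "('a,'c) monoid_scheme \<Rightarrow> (nat \<Rightarrow> 'a) \<Rightarrow> nat \<Rightarrow> (int \<Rightarrow> 'a) \<times> int" where
  "belt H a i = (\<lambda>k. if k > 0 then a i else \<one>\<^bsub>H\<^esub>, 0)"

definition Kgrp :: "('a,'c) monoid_scheme \<Rightarrow> (nat \<Rightarrow> 'a) \<Rightarrow> ((int \<Rightarrow> 'a) \<times> int) monoid" where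
  "Kgrp H a = (KW H)\<lparr>carrier := generate (KW H) (insert (zelt H) (belt H a ` {1..}))\<rparr>"

text \<open><s> is modelled as integer_group with s = 1.\<close>
definition GW :: "('a,'c) monoid_scheme \<Rightarrow> (nat \<Rightarrow> 'a)
                  \<Rightarrow> ((int \<Rightarrow> (int \<Rightarrow> 'a) \<times> int) \<times> int) monoid" where
  "GW H a = wreath (Kgrp H a) integer_group"

definition cfun :: "('a,'c) monoid_scheme \<Rightarrow> (nat \<Rightarrow> 'a) \<Rightarrow> int \<Rightarrow> (int \<Rightarrow> 'a) \<times> int" where
  "cfun H a k = (if k = 1 then zelt H
                 else if (\<exists>i::nat. i > 0 \<and> k = 2 ^ i) then belt H a (THE i::nat. i > 0 \<and> k = 2 ^ i)
                 else \<one>\<^bsub>Kgrp H a\<^esub>)"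

definition celt :: "('a,'c) monoid_scheme \<Rightarrow> (nat \<Rightarrow> 'a) \<Rightarrow> (int \<Rightarrow> (int \<Rightarrow> 'a) \<times> int) \<times> int" where
  "celt H a = (cfun H a, 0)"

definition selt :: "('a,'c) monoid_scheme \<Rightarrow> (nat \<Rightarrow> 'a) \<Rightarrow> (int \<Rightarrow> (int \<Rightarrow> 'a) \<times> int) \<times> int" where
  "selt H a = (\<lambda>_. \<one>\<^bsub>Kgrp H a\<^esub>, 1)"

definition Ggrp :: "('a,'c) monoid_scheme \<Rightarrow> (nat \<Rightarrow> 'a)
                    \<Rightarrow> ((int \<Rightarrow> (int \<Rightarrow> 'a) \<times> int) \<times> int) monoid" where
  "Ggrp H a = (GW H a)\<lparr>carrier := generate (GW H a) {celt H a, selt H a}\<rparr>"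

end

theory Submission imports Defs begin

abbreviation WZ :: "('a,'c) monoid_scheme \<Rightarrow> ((int \<Rightarrow> 'a) \<times> int) monoid" where
  "WZ A \<equiv> wreath A integer_group"

lemma carrier_WZ: "carrier (WZ A) = {(f,b). \<forall>x. f x \<in> carrier A}"
  by (auto simp: wreath_def integer_group_def)

lemma mult_WZ: "(f,b) \<otimes>\<^bsub>WZ A\<^esub> (g,c) = (\<lambda>x. f x \<otimes>\<^bsub>A\<^esub> g (x + b), b + c)"
  by (simp add: wreath_def integer_group_def)

lemma mult_WZ': "p \<otimes>\<^bsub>WZ A\<^esub> q = (\<lambda>x. fst p x \<otimes>\<^bsub>A\<^esub> fst q (x + snd p), snd p + snd q)"
  by (cases p; cases q) (simp add: mult_WZ)

lemma one_WZ: "\<one>\<^bsub>WZ A\<^esub> = (\<lambda>x. \<one>\<^bsub>A\<^esub>, 0)"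
  by (simp add: wreath_def integer_group_def)

lemma group_WZ:
  assumes "group A" shows "group (WZ A)"
proof (rule groupI)
  interpret A: group A by fact
  show "x \<otimes>\<^bsub>WZ A\<^esub> y \<in> carrier (WZ A)" if "x \<in> carrier (WZ A)" "y \<in> carrier (WZ A)" for x y
    using that by (auto simp: carrier_WZ mult_WZ')
  show "\<one>\<^bsub>WZ A\<^esub> \<in> carrier (WZ A)" by (simp add: carrier_WZ one_WZ)
  show "x \<otimes>\<^bsub>WZ A\<^esub> y \<otimes>\<^bsub>WZ A\<^esub> z = x \<otimes>\<^bsub>WZ A\<^esub> (y \<otimes>\<^bsub>WZ A\<^esub> z)"
    if "x \<in> carrier (WZ A)" "y \<in> carrier (WZ A)" "z \<in> carrier (WZ A)" for x y z
    using that by (auto simp: carrier_WZ mult_WZ' A.m_assoc add.assoc)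
  show "\<one>\<^bsub>WZ A\<^esub> \<otimes>\<^bsub>WZ A\<^esub> x = x" if "x \<in> carrier (WZ A)" for x
    using that by (auto simp: carrier_WZ mult_WZ' one_WZ)
  show "\<exists>y\<in>carrier (WZ A). y \<otimes>\<^bsub>WZ A\<^esub> x = \<one>\<^bsub>WZ A\<^esub>" if "x \<in> carrier (WZ A)" for x
  proof (cases x)
    case (Pair f b)
    let ?y = "(\<lambda>k. inv\<^bsub>A\<^esub> f (k - b), - b)"
    have "?y \<in> carrier (WZ A)" using that Pair by (auto simp: carrier_WZ)
    moreover have "?y \<otimes>\<^bsub>WZ A\<^esub> x = \<one>\<^bsub>WZ A\<^esub>"
      using that Pair by (auto simp: carrier_WZ mult_WZ one_WZ)
    ultimately show ?thesis by blast
  qed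
qed

lemma pow_WZ_snd: "snd (x [^]\<^bsub>WZ A\<^esub> (n::nat)) = int n * snd x"
  by (induction n) (auto simp: one_WZ mult_WZ' algebra_simps)

lemma pow_WZ_0: "(f, 0) [^]\<^bsub>WZ A\<^esub> (n::nat) = (\<lambda>x. f x [^]\<^bsub>A\<^esub> n, 0)"
  by (induction n) (auto simp: one_WZ mult_WZ')

lemma torsion_free_WZ:
  assumes "group A" "torsion_free A" shows "torsion_free (WZ A)"
  unfolding torsion_free_def
proof (intro ballI impI allI)
  fix x and n :: nat
  assume xx: "x \<in> carrier (WZ A)" "x \<noteq> \<one>\<^bsub>WZ A\<^esub>" "0 < n"
  show "x [^]\<^bsub>WZ A\<^esub> n \<noteq> \<one>\<^bsub>WZ A\<^esub>"
  proof
    assume e: "x [^]\<^bsub>WZ A\<^esub> n = \<one>\<^bsub>WZ A\<^esub>"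
    obtain f b where xb: "x = (f, b)" by (cases x)
    have "int n * b = 0" using arg_cong[OF e, of snd] pow_WZ_snd[where x=x and A=A and n=n] by (simp add: xb one_WZ)
    then have b0: "b = 0" using xx(3) by simp
    have "\<forall>k. f k [^]\<^bsub>A\<^esub> n = \<one>\<^bsub>A\<^esub>" using e by (simp add: xb b0 pow_WZ_0 one_WZ fun_eq_iff)
    moreover have "\<forall>k. f k \<in> carrier A" using xx(1) xb by (simp add: carrier_WZ)
    ultimately have "\<forall>k. f k = \<one>\<^bsub>A\<^esub>" using assms(2) xx(3) unfolding torsion_free_def by blast
    then show False using xx(2) by (simp add: xb b0 one_WZ fun_eq_iff)
  qed
qed

lemma torsion_free_sub:
  assumes "torsion_free M" "Y \<subseteq> carrier M" shows "torsion_free (M \<lparr>carrier := Y\<rparr>)"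
proof -
  have p: "x [^]\<^bsub>M \<lparr>carrier := Y\<rparr>\<^esub> (n::nat) = x [^]\<^bsub>M\<^esub> n" for x n
    unfolding nat_pow_def by simp
  show ?thesis using assms unfolding torsion_free_def by (auto simp: p)
qed


lemma li_sub:
  assumes "group M" "subgroup Y M" "locally_indicable M"
  shows "locally_indicable (M \<lparr>carrier := Y\<rparr>)"
  unfolding locally_indicable_def
proof (intro allI impI)
  interpret M: group M by fact
  fix S assume S: "finite S \<and> S \<subseteq> carrier (M \<lparr>carrier := Y\<rparr>) \<and> generate (M \<lparr>carrier := Y\<rparr>) S \<noteq> {\<one>\<^bsub>M \<lparr>carrier := Y\<rparr>\<^esub>}"
  have SY: "S \<subseteq> Y" using S by simp
  have SM: "S \<subseteq> carrier M" using SY subgroup.subset[OF assms(2)] by blast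
  have g: "generate (M \<lparr>carrier := Y\<rparr>) S = generate M S"
    by (rule M.generate_consistent[OF SY assms(2)])
  have sg: "subgroup_generated (M \<lparr>carrier := Y\<rparr>) S = subgroup_generated M S"
    unfolding subgroup_generated_def using SY SM g by (simp add: Int_absorb1)
  have "finite S \<and> S \<subseteq> carrier M \<and> generate M S \<noteq> {\<one>\<^bsub>M\<^esub>}" using S SM g by simp
  then obtain f where "f \<in> hom (subgroup_generated M S) integer_group \<and> f ` generate M S = UNIV"
    using assms(3) unfolding locally_indicable_def by blast
  then show "\<exists>f. f \<in> hom (subgroup_generated (M \<lparr>carrier := Y\<rparr>) S) integer_group \<and>
             f ` generate (M \<lparr>carrier := Y\<rparr>) S = UNIV"
    using sg g by auto
qed

lemma intsub_mult:
  assumes "subgroup P integer_group" "x \<in> P" shows "k * x \<in> P"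
  using group.subgroup_int_pow_closed[OF group_integer_group assms, of k] by simp

lemma intsub_least:
  assumes P: "subgroup P integer_group" and t: "t \<in> P" "t \<noteq> 0"
  shows "\<exists>d>0. P = range (\<lambda>k. k * d)"
proof -
  have "\<exists>d. d > 0 \<and> d \<in> P"
  proof (cases "t > 0")
    case True then show ?thesis using t by blast
  next
    case False
    then have "-t > 0" using t by simp
    moreover have "(-1) * t \<in> P" by (rule intsub_mult[OF P t(1)])
    ultimately show ?thesis by (intro exI[of _ "-t"]) auto
  qed
  then obtain d0 where d0: "d0 > 0" "d0 \<in> P" by blast
  define d where "d = (LEAST n::nat. n > 0 \<and> int n \<in> P)"
  have ex: "\<exists>n::nat. n > 0 \<and> int n \<in> P" using d0 by (intro exI[of _ "nat d0"]) auto
  have dP: "d > 0 \<and> int d \<in> P" unfolding d_def by (rule LeastI_ex[OF ex])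
  have dmin: "\<And>n::nat. n > 0 \<Longrightarrow> int n \<in> P \<Longrightarrow> d \<le> n" unfolding d_def by (rule Least_le) blast
  have "P = range (\<lambda>k. k * int d)"
  proof
    show "range (\<lambda>k. k * int d) \<subseteq> P" using dP intsub_mult[OF P] by auto
    show "P \<subseteq> range (\<lambda>k. k * int d)"
    proof
      fix p assume p: "p \<in> P"
      have "(- (p div int d)) * int d \<in> P" using intsub_mult[OF P, of "int d" "- (p div int d)"] dP by blast
      then have "p + (- (p div int d)) * int d \<in> P"
        using p subgroup.m_closed[OF P] by (metis mult_integer_group)
      moreover have "p + (- (p div int d)) * int d = p mod int d"
        by (simp add: minus_div_mult_eq_mod[symmetric])
      ultimately have m: "p mod int d \<in> P" by simp
      have "p mod int d = 0"
      proof (rule ccontr)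
        assume "p mod int d \<noteq> 0"
        moreover have "0 \<le> p mod int d" using dP by simp
        ultimately have pos: "p mod int d > 0" by simp
        have "d \<le> nat (p mod int d)" using dmin[of "nat (p mod int d)"] pos m by simp
        then have "int d \<le> p mod int d" using pos by (simp add: le_nat_iff)
        moreover have "p mod int d < int d" using dP by simp
        ultimately show False by simp
      qed
      then have "p = (p div int d) * int d" using div_mult_mod_eq[of p "int d"] by simp
      then show "p \<in> range (\<lambda>k. k * int d)" by blast
    qed
  qed
  then show ?thesis using dP by (intro exI[of _ "int d"]) auto
qed


lemma li_WZ:
  assumes grpA: "group A" and liA: "locally_indicable A"
  shows "locally_indicable (WZ A)"
  unfolding locally_indicable_def
proof (intro allI impI)
  interpret A: group A by fact
  interpret W: group "WZ A" by (rule group_WZ[OF grpA])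
  fix S assume S: "finite S \<and> S \<subseteq> carrier (WZ A) \<and> generate (WZ A) S \<noteq> {\<one>\<^bsub>WZ A\<^esub>}"
  have SW: "S \<subseteq> carrier (WZ A)" using S by blast
  have cSG: "carrier (subgroup_generated (WZ A) S) = generate (WZ A) S"
    using SW by (simp add: carrier_subgroup_generated Int_absorb1)
  have sgS: "subgroup (generate (WZ A) S) (WZ A)" by (rule W.generate_is_subgroup[OF SW])
  show "\<exists>f. f \<in> hom (subgroup_generated (WZ A) S) integer_group \<and> f ` generate (WZ A) S = UNIV"
  proof (cases "\<exists>s\<in>S. snd s \<noteq> 0")
    case True
    then obtain s where s: "s \<in> S" "snd s \<noteq> 0" by blast
    have hs: "group_hom (WZ A) integer_group snd"
      by (rule group_hom.intro[OF W.is_group group_integer_group], rule group_hom_axioms.intro)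
         (auto simp: hom_def mult_WZ')
    define P where "P = snd ` generate (WZ A) S"
    have sP: "subgroup P integer_group"
      unfolding P_def by (rule group_hom.subgroup_img_is_subgroup[OF hs sgS])
    have "snd s \<in> P" unfolding P_def using s by (auto intro: generate.incl)
    then obtain d where d: "d > 0" "P = range (\<lambda>k. k * d)" using intsub_least[OF sP] s by blast
    have dv: "x \<in> generate (WZ A) S \<Longrightarrow> d dvd snd x" for x
    proof -
      assume "x \<in> generate (WZ A) S"
      then have "snd x \<in> range (\<lambda>k. k * d)" using d unfolding P_def by blast
      then show ?thesis by auto
    qed
    let ?f = "\<lambda>x. snd x div d"
    have "?f \<in> hom (subgroup_generated (WZ A) S) integer_group"
    proof (rule homI)
      show "?f x \<in> carrier integer_group" for x by simp
      fix x y assume "x \<in> carrier (subgroup_generated (WZ A) S)" "y \<in> carrier (subgroup_generated (WZ A) S)"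
      then have "d dvd snd x" "d dvd snd y" using dv cSG by auto
      then show "?f (x \<otimes>\<^bsub>subgroup_generated (WZ A) S\<^esub> y) = ?f x \<otimes>\<^bsub>integer_group\<^esub> ?f y"
        by (auto simp: mult_WZ')
    qed
    moreover have "?f ` generate (WZ A) S = UNIV"
    proof -
      have "k \<in> ?f ` generate (WZ A) S" for k
      proof -
        have "k * d \<in> P" using d by auto
        then obtain x where "x \<in> generate (WZ A) S" "snd x = k * d" unfolding P_def by auto
        then show ?thesis using d by (intro image_eqI[of _ _ x]) auto
      qed
      then show ?thesis by blast
    qed
    ultimately show ?thesis by blast
  next
    case False
    then have S0: "\<forall>s\<in>S. snd s = 0" by blast
    define B where "B = {x \<in> carrier (WZ A). snd x = 0}"
    have sB: "subgroup B (WZ A)"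
    proof (rule W.subgroupI)
      show "B \<subseteq> carrier (WZ A)" unfolding B_def by blast
      show "B \<noteq> {}" unfolding B_def using W.one_closed by (auto simp: one_WZ)
      show "inv\<^bsub>WZ A\<^esub> x \<in> B" if "x \<in> B" for x
      proof -
        have x: "x \<in> carrier (WZ A)" "snd x = 0" using that B_def by auto
        have "inv\<^bsub>WZ A\<^esub> x \<otimes>\<^bsub>WZ A\<^esub> x = \<one>\<^bsub>WZ A\<^esub>" using x W.l_inv by blast
        then have "snd (inv\<^bsub>WZ A\<^esub> x) + snd x = 0" by (simp add: mult_WZ' one_WZ)
        then show ?thesis using x W.inv_closed unfolding B_def by auto
      qed
      show "x \<otimes>\<^bsub>WZ A\<^esub> y \<in> B" if "x \<in> B" "y \<in> B" for x y
        using that unfolding B_def by (auto simp: mult_WZ' carrier_WZ)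
    qed
    have gB: "generate (WZ A) S \<subseteq> B"
    proof (rule W.generate_subgroup_incl)
      show "S \<subseteq> B" using S0 SW by (auto simp: B_def)
    qed (rule sB)
    have "\<exists>y. y \<in> generate (WZ A) S \<and> y \<noteq> \<one>\<^bsub>WZ A\<^esub>"
    proof (rule ccontr)
      assume "\<not> ?thesis"
      then have "generate (WZ A) S \<subseteq> {\<one>\<^bsub>WZ A\<^esub>}" by blast
      then show False using S generate.one[of "WZ A" S] by auto
    qed
    then obtain y where y: "y \<in> generate (WZ A) S" "y \<noteq> \<one>\<^bsub>WZ A\<^esub>" by blast
    have ysnd: "snd y = 0" using y gB B_def by auto
    obtain x0 where x0: "fst y x0 \<noteq> \<one>\<^bsub>A\<^esub>"
      using y(2) ysnd by (cases y) (auto simp: one_WZ fun_eq_iff)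
    let ?ev = "\<lambda>z. fst z x0"
    let ?T = "?ev ` S"
    have TA: "?T \<subseteq> carrier A" using SW by (auto simp: carrier_WZ)
    let ?SG = "subgroup_generated (WZ A) S"
    have hev: "group_hom ?SG A ?ev"
    proof (rule group_hom.intro[OF W.group_subgroup_generated grpA], rule group_hom_axioms.intro)
      show "?ev \<in> hom ?SG A"
      proof (rule homI)
        fix x assume "x \<in> carrier ?SG"
        then have "x \<in> carrier (WZ A)" using cSG W.generate_incl[OF SW] by auto
        then show "?ev x \<in> carrier A" by (auto simp: carrier_WZ)
      next
        fix x z assume "x \<in> carrier ?SG" "z \<in> carrier ?SG"
        then have "snd x = 0" using cSG gB B_def by auto
        then show "?ev (x \<otimes>\<^bsub>?SG\<^esub> z) = ?ev x \<otimes>\<^bsub>A\<^esub> ?ev z" by (simp add: mult_WZ')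
      qed
    qed
    have SS: "S \<subseteq> generate (WZ A) S" by (auto intro: generate.incl)
    have gen_eq: "generate ?SG S = generate (WZ A) S"
      unfolding subgroup_generated_def using SW
      by (simp add: Int_absorb1 W.generate_consistent[OF SS sgS])
    have imgT: "generate A ?T = ?ev ` generate (WZ A) S"
      using group_hom.generate_img[OF hev, of S] SS cSG gen_eq by simp
    have "fst y x0 \<in> generate A ?T" using imgT y(1) by blast
    then have "generate A ?T \<noteq> {\<one>\<^bsub>A\<^esub>}" using x0 by blast
    moreover have "finite ?T" using S by blast
    ultimately have pre: "finite ?T \<and> ?T \<subseteq> carrier A \<and> generate A ?T \<noteq> {\<one>\<^bsub>A\<^esub>}"
      using TA by blast
    have "\<exists>f. f \<in> hom (subgroup_generated A ?T) integer_group \<and> f ` generate A ?T = UNIV"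
      using liA pre unfolding locally_indicable_def by (rule_tac mp[OF spec[of _ ?T]])
    then obtain g where g: "g \<in> hom (subgroup_generated A ?T) integer_group" "g ` generate A ?T = UNIV"
      by blast
    have "?ev \<in> hom ?SG (subgroup_generated A ?T)"
    proof (rule homI)
      fix x assume "x \<in> carrier ?SG"
      then show "?ev x \<in> carrier (subgroup_generated A ?T)"
        using imgT cSG TA by (auto simp: carrier_subgroup_generated Int_absorb1)
    next
      fix x z assume "x \<in> carrier ?SG" "z \<in> carrier ?SG"
      then show "?ev (x \<otimes>\<^bsub>?SG\<^esub> z) = ?ev x \<otimes>\<^bsub>subgroup_generated A ?T\<^esub> ?ev z"
        using group_hom.hom_mult[OF hev] by simp
    qed
    then have "g \<circ> ?ev \<in> hom ?SG integer_group" using g(1) by (rule hom_compose)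
    moreover have "(g \<circ> ?ev) ` generate (WZ A) S = UNIV" using g(2) imgT by (simp add: image_image)
    ultimately show ?thesis by blast
  qed
qed


lemma main_facts:
  fixes H :: "('a,'c) monoid_scheme" and a :: "nat \<Rightarrow> 'a"
  assumes grpH: "group H" and aH: "\<forall>i\<ge>1. a i \<in> carrier H"
  shows "group (KW H)" "subgroup (carrier (Kgrp H a)) (KW H)" "group (Kgrp H a)"
        "group (GW H a)" "subgroup (carrier (Ggrp H a)) (GW H a)"
proof -
  show gK: "group (KW H)" unfolding KW_def by (rule group_WZ[OF grpH])
  interpret K: group "KW H" by (rule gK)
  let ?Sk = "insert (zelt H) (belt H a ` {1..})"
  have Sk: "?Sk \<subseteq> carrier (KW H)"
    using aH monoid.one_closed[OF group.is_monoid[OF grpH]] by (auto simp: KW_def carrier_WZ zelt_def belt_def)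
  show sK: "subgroup (carrier (Kgrp H a)) (KW H)"
    unfolding Kgrp_def using K.generate_is_subgroup[OF Sk] by simp
  show gKg: "group (Kgrp H a)"
    unfolding Kgrp_def using subgroup.subgroup_is_group[OF K.generate_is_subgroup[OF Sk] gK] by simp
  show gG: "group (GW H a)" unfolding GW_def by (rule group_WZ[OF gKg])
  interpret G: group "GW H a" by (rule gG)
  have cf: "cfun H a k \<in> carrier (Kgrp H a)" for k
  proof -
    have c: "carrier (Kgrp H a) = generate (KW H) ?Sk" by (simp add: Kgrp_def)
    show ?thesis
    proof (cases "k = 1")
      case True then show ?thesis by (simp add: cfun_def c generate.incl)
    next
      case k1: False
      show ?thesis
      proof (cases "\<exists>i::nat. i > 0 \<and> k = 2 ^ i")
        case True
        then obtain i :: nat where i: "i > 0" "k = 2 ^ i" by blast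
        have th: "(THE i::nat. i > 0 \<and> k = 2 ^ i) = i"
        proof (rule the_equality)
          show "i > 0 \<and> k = 2 ^ i" using i by simp
          show "j = i" if "j > 0 \<and> k = 2 ^ j" for j
          proof -
            have "(2::int) ^ j = 2 ^ i" using that i by simp
            then show ?thesis using power_inject_exp[of "2::int" j i] by simp
          qed
        qed
        have "cfun H a k = belt H a i" using k1 True th by (simp add: cfun_def)
        moreover have "belt H a i \<in> ?Sk" using i by auto
        ultimately show ?thesis using c generate.incl by metis
      next
        case False
        have "cfun H a k = \<one>\<^bsub>Kgrp H a\<^esub>" unfolding cfun_def
          by (simp only: if_not_P[OF k1] if_not_P[OF False])
        then show ?thesis using generate.one[of "KW H" ?Sk]
          by (simp add: c) (simp add: Kgrp_def)
      qed
    qed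
  qed
  have Sg: "{celt H a, selt H a} \<subseteq> carrier (GW H a)"
    using cf monoid.one_closed[OF group.is_monoid[OF gKg]] by (auto simp: GW_def carrier_WZ celt_def selt_def)
  show "subgroup (carrier (Ggrp H a)) (GW H a)"
    unfolding Ggrp_def using G.generate_is_subgroup[OF Sg] by simp
qed


theorem corollary3:
  fixes H :: "('a,'c) monoid_scheme" and a :: "nat \<Rightarrow> 'a"
  assumes "group H"
    and "\<forall>i\<ge>1. a i \<in> carrier H"
    and "carrier H = generate H (a ` {1..})"
  shows "(torsion_free H \<longrightarrow> torsion_free (Ggrp H a))
       \<and> (locally_indicable H \<longrightarrow> locally_indicable (Ggrp H a))"
proof -
  note mf = main_facts[OF assms(1,2)]
  have K: "Kgrp H a = (KW H) \<lparr>carrier := carrier (Kgrp H a)\<rparr>" by (simp add: Kgrp_def)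
  have G: "Ggrp H a = (GW H a) \<lparr>carrier := carrier (Ggrp H a)\<rparr>" by (simp add: Ggrp_def)
  have tf: "torsion_free (Ggrp H a)" if "torsion_free H"
  proof -
    have "torsion_free (KW H)" unfolding KW_def by (rule torsion_free_WZ[OF assms(1) that])
    then have "torsion_free (Kgrp H a)"
      using torsion_free_sub[OF _ subgroup.subset[OF mf(2)]] K by metis
    then have "torsion_free (GW H a)" unfolding GW_def by (rule torsion_free_WZ[OF mf(3)])
    then show ?thesis using torsion_free_sub[OF _ subgroup.subset[OF mf(5)]] G by metis
  qed
  have li: "locally_indicable (Ggrp H a)" if "locally_indicable H"
  proof -
    have "locally_indicable (KW H)" unfolding KW_def by (rule li_WZ[OF assms(1) that])
    then have "locally_indicable (Kgrp H a)"
      using li_sub[OF mf(1) mf(2)] K by metis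
    then have "locally_indicable (GW H a)" unfolding GW_def by (rule li_WZ[OF mf(3)])
    then show ?thesis using li_sub[OF mf(4) mf(5)] G by metis
  qed
  show ?thesis using tf li by blast
qed

end
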